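(* Let $r>1$, $0\le m<\infty$, $0\le C<\infty$, and for $p\in\mathcal M_1^+$ and $s\in\{1,r\}$ let $M_s(p)=\sum_{k\ge0}|k-m|^sp_k$. Let $$\mathcal M^+_{1,m,C}=\Big\{p\in\mathcal M_1^+:\ \sum_{k\ge0}k\,p_k=m,\ M_r(p)\le C\Big\},$$ equipped with the metric induced by the total variation norm $\|x\|_1=\sum_k|x_k|$. Then $\mathcal M^+_{1,m,C}$ is compact and convex. Both $M_1$ and $M_r$ satisfy $M_s(\mathcal R_0(p))\le M_s(p)$, with equality if and only if $p$ is a fixed point of $\mathcal R_0$. Furthermore, $M_1$ is a continuous map from $\mathcal M^+_{1,m,C}$ to $[0,\infty)$ and a Lyapunov function for the continuous-time dynamics $\frac{d}{dt}p(t)=\mathcal R_0(p(t))-p(t)$ on $\mathcal M^+_{1,m,C}$.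
   Context: $\mathcal M_1^+$ is the set of probability measures on $\mathbb N_0$, identified with nonnegative sequences summing to $1$, inside $\ell^1(\mathbb N_0)$. $\mathcal R_0(p)_i=\sum_{k,\ell\ge0,\ \min\{k,\ell\}\le i\le\max\{k,\ell\}}\frac{p_kp_\ell}{1+|k-\ell|}$. For an initial value problem $\frac{d}{dt}x(t)=f(x(t))$, $x(0)=x_0\in X$, with $f$ locally Lipschitz on an open subset of a Banach space containing $X$, a continuous function $L:X\to\mathbb R$ is a Lyapunov function if its orbital derivative $\dot L(x_0)=\liminf_{t\to0^+}\frac1t\big(L(x(t))-L(x_0)\big)$ satisfies $\dot L(x_0)\le0$ for all $x_0\in X$. *)

theory Defs
  imports "HOL-Analysis.Analysis"
begin

definition l1_space :: "(nat \<Rightarrow> real) set" where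
  "l1_space = {x. summable (\<lambda>k. \<bar>x k\<bar>)}"

definition l1_norm :: "(nat \<Rightarrow> real) \<Rightarrow> real" where
  "l1_norm x = (if summable (\<lambda>k. \<bar>x k\<bar>) then (\<Sum>k. \<bar>x k\<bar>) else 0)"

definition l1_dist :: "(nat \<Rightarrow> real) \<Rightarrow> (nat \<Rightarrow> real) \<Rightarrow> real" where
  "l1_dist x y = l1_norm (\<lambda>k. x k - y k)"

lemma l1_diff_summable:
  assumes "x \<in> l1_space" "y \<in> l1_space"
  shows "summable (\<lambda>k. \<bar>x k - y k\<bar>)"
proof -
  have "summable (\<lambda>k. \<bar>x k\<bar> + \<bar>y k\<bar>)"
    using assms by (simp add: l1_space_def summable_add)
  then show ?thesis
    by (rule summable_comparison_test'[where N=0]) auto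
qed

interpretation l1: Metric_space l1_space l1_dist
proof
  fix x y show "0 \<le> l1_dist x y"
    unfolding l1_dist_def l1_norm_def by (auto intro: suminf_nonneg)
next
  fix x y show "l1_dist x y = l1_dist y x"
    unfolding l1_dist_def l1_norm_def by (simp add: abs_minus_commute)
next
  fix x y assume xy: "x \<in> l1_space" "y \<in> l1_space"
  show "(l1_dist x y = 0) = (x = y)"
  proof
    assume "l1_dist x y = 0"
    then have "\<forall>k. \<bar>x k - y k\<bar> = 0"
      using suminf_eq_zero_iff[OF l1_diff_summable[OF xy]] l1_diff_summable[OF xy]
      unfolding l1_dist_def l1_norm_def by auto
    then show "x = y" by auto
  qed (simp add: l1_dist_def l1_norm_def)
next
  fix x y z assume xyz: "x \<in> l1_space" "y \<in> l1_space" "z \<in> l1_space"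
  have s1: "summable (\<lambda>k. \<bar>x k - y k\<bar>)" and s2: "summable (\<lambda>k. \<bar>y k - z k\<bar>)"
    and s3: "summable (\<lambda>k. \<bar>x k - z k\<bar>)"
    using xyz l1_diff_summable by auto
  have "(\<Sum>k. \<bar>x k - z k\<bar>) \<le> (\<Sum>k. \<bar>x k - y k\<bar> + \<bar>y k - z k\<bar>)"
    by (rule suminf_le) (use s1 s2 s3 in \<open>auto intro: summable_add\<close>)
  also have "\<dots> = (\<Sum>k. \<bar>x k - y k\<bar>) + (\<Sum>k. \<bar>y k - z k\<bar>)"
    using s1 s2 by (rule suminf_add[symmetric])
  finally show "l1_dist x z \<le> l1_dist x y + l1_dist y z"
    unfolding l1_dist_def l1_norm_def using s1 s2 s3 by simp
qed

definition prob_seqs :: "(nat \<Rightarrow> real) set" where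
  "prob_seqs = {p. (\<forall>k. 0 \<le> p k) \<and> p sums 1}"

definition R0 :: "(nat \<Rightarrow> real) \<Rightarrow> nat \<Rightarrow> real" where
  "R0 p i = (\<Sum>\<^sub>\<infinity>(k, l) \<in> {(k, l). min k l \<le> i \<and> i \<le> max k l}.
              p k * p l / (1 + \<bar>real k - real l\<bar>))"

definition moment :: "real \<Rightarrow> real \<Rightarrow> (nat \<Rightarrow> real) \<Rightarrow> real" where
  "moment m s p = (\<Sum>k. \<bar>real k - m\<bar> powr s * p k)"

definition has_moment :: "real \<Rightarrow> real \<Rightarrow> (nat \<Rightarrow> real) \<Rightarrow> bool" where
  "has_moment m s p \<longleftrightarrow> summable (\<lambda>k. \<bar>real k - m\<bar> powr s * p k)"

definition Mset :: "real \<Rightarrow> real \<Rightarrow> real \<Rightarrow> (nat \<Rightarrow> real) set" where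
  "Mset r m C = {p \<in> prob_seqs. summable (\<lambda>k. real k * p k) \<and> (\<Sum>k. real k * p k) = m
                    \<and> has_moment m r p \<and> moment m r p \<le> C}"

definition l1_has_derivative_within ::
  "(real \<Rightarrow> nat \<Rightarrow> real) \<Rightarrow> (nat \<Rightarrow> real) \<Rightarrow> real \<Rightarrow> real set \<Rightarrow> bool" where
  "l1_has_derivative_within x v t T \<longleftrightarrow>
     (\<forall>s. x s - x t \<in> l1_space) \<and> v \<in> l1_space \<and>
     ((\<lambda>s. l1_norm (\<lambda>k. (x s k - x t k) / (s - t) - v k)) \<longlongrightarrow> 0) (at t within T)"

end

theory Submission imports Defs begin
lemma unit_subseq:
  fixes \<sigma> :: "nat \<Rightarrow> nat \<Rightarrow> real"
  assumes "\<And>n k. 0 \<le> \<sigma> n k \<and> \<sigma> n k \<le> 1"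
  shows "\<exists>l r. strict_mono r \<and> (\<forall>k. (\<lambda>n. \<sigma> (r n) k) \<longlonglongrightarrow> l k)"
proof -
  have "compactin (product_topology (\<lambda>_. euclideanreal) UNIV) (PiE UNIV (\<lambda>_::nat. {0..1::real}))"
    by (subst compactin_PiE) auto
  then have "compact (PiE UNIV (\<lambda>_::nat. {0..1::real}))"
    by (simp add: euclidean_product_topology compactin_euclidean_iff)
  then have "seq_compact (PiE UNIV (\<lambda>_::nat. {0..1::real}))"
    by (rule compact_imp_seq_compact)
  moreover have "\<forall>n. \<sigma> n \<in> PiE UNIV (\<lambda>_::nat. {0..1::real})"
    using assms by auto
  ultimately obtain l r where "strict_mono r" "(\<sigma> \<circ> r) \<longlonglongrightarrow> l"
    unfolding seq_compact_def by blast
  moreover have "(\<lambda>n. \<sigma> (r n) k) \<longlonglongrightarrow> l k" for k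
  proof -
    have "continuous_on UNIV (\<lambda>x::nat\<Rightarrow>real. x k)" by simp
    from continuous_on_tendsto_compose[OF this \<open>(\<sigma> \<circ> r) \<longlonglongrightarrow> l\<close>]
    show ?thesis by (simp add: o_def)
  qed
  ultimately show ?thesis by blast
qed

lemma R0_weighted:
  fixes p g :: "nat \<Rightarrow> real"
  assumes p0: "\<And>k. 0 \<le> p k" and g0: "\<And>i. 0 \<le> g i"
    and S: "((\<lambda>(k,l). p k * p l * (\<Sum>i\<in>{min k l..max k l}. g i) / (1 + \<bar>real k - real l\<bar>)) has_sum S) UNIV"
  shows "((\<lambda>i. g i * R0 p i) has_sum S) UNIV"
proof -
  define F where "F = (\<lambda>((k::nat,l::nat),i::nat). p k * p l * g i / (1 + \<bar>real k - real l\<bar>))"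
  define B where "B = (\<lambda>(k::nat,l::nat). {min k l..max k l})"
  define c where "c = (\<lambda>(k,l). p k * p l * (\<Sum>i\<in>{min k l..max k l}. g i) / (1 + \<bar>real k - real l\<bar>))"
  have inner: "((\<lambda>i. F (kl, i)) has_sum c kl) (B kl)" for kl
  proof -
    obtain k l where kl: "kl = (k,l)" by fastforce
    show ?thesis unfolding kl F_def B_def c_def
      by (rule has_sum_finiteI) (auto simp: sum_divide_distrib sum_distrib_left)
  qed
  have Fnn: "0 \<le> F x" for x
    using p0 g0 by (auto simp: F_def split: prod.splits)
  have cS: "(c has_sum S) UNIV" using S unfolding c_def .
  have Fs: "F summable_on Sigma UNIV B"
    by (rule summable_on_SigmaI[OF inner]) (use cS Fnn in \<open>auto simp: summable_on_def\<close>)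
  have FS: "(F has_sum S) (Sigma UNIV B)"
    by (rule has_sum_SigmaI[OF inner cS Fs])
  define D where "D = (\<lambda>i. {(k::nat, l::nat). min k l \<le> i \<and> i \<le> max k l})"
  have eq: "Sigma UNIV B = prod.swap ` Sigma UNIV D"
    by (force simp: B_def D_def image_iff)
  have FS2: "((F \<circ> prod.swap) has_sum S) (Sigma UNIV D)"
    using FS unfolding eq by (subst (asm) has_sum_reindex) auto
  have FS2': "((\<lambda>(i,kl). F (kl,i)) has_sum S) (Sigma UNIV D)"
    using FS2 by (simp add: o_def case_prod_unfold prod.swap_def)
  have inner2: "((\<lambda>kl. F (kl,i)) has_sum g i * R0 p i) (D i)" for i
  proof -
    have "(\<lambda>(i,kl). F (kl,i)) summable_on Sigma UNIV D"
      using FS2' by (auto simp: summable_on_def)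
    then have s: "(\<lambda>kl. F (kl,i)) summable_on D i"
      using summable_on_SigmaD1[of "\<lambda>i kl. F (kl,i)" UNIV D i] by auto
    have "infsum (\<lambda>kl. F (kl,i)) (D i) = infsum (\<lambda>kl. g i * (case kl of (k,l) \<Rightarrow> p k * p l / (1 + \<bar>real k - real l\<bar>))) (D i)"
      by (rule infsum_cong) (auto simp: F_def split: prod.splits)
    also have "\<dots> = g i * R0 p i"
      by (subst infsum_cmult_right') (simp add: R0_def D_def)
    finally show ?thesis using s by (metis has_sum_infsum)
  qed
  show ?thesis
    by (rule has_sum_Sigma'[of "\<lambda>(i,kl). F (kl,i)"]) (use FS2' inner2 in auto)
qed

lemma tangent_pos:
  fixes u w s :: real
  assumes s: "s \<ge> 1" and w: "w > 0" and u: "u > 0"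
  shows "u powr s \<ge> w powr s + s * w powr (s-1) * (u - w)"
    and "s > 1 \<Longrightarrow> u \<noteq> w \<Longrightarrow> u powr s > w powr s + s * w powr (s-1) * (u - w)"
proof -
  define h where "h = (\<lambda>t::real. t powr s - s * w powr (s-1) * t)"
  define h' where "h' = (\<lambda>t::real. s * t powr (s-1) - s * w powr (s-1))"
  have D: "(h has_real_derivative h' t) (at t)" if "t > 0" for t
    unfolding h_def h'_def
    by (rule derivative_eq_intros has_real_derivative_powr[OF that] | simp)+
  have key: "h u - h w \<ge> 0 \<and> (s > 1 \<longrightarrow> u \<noteq> w \<longrightarrow> h u - h w > 0)"
  proof (cases "u = w")
    case True then show ?thesis by simp
  next
    case False
    show ?thesis
    proof (cases "u > w")
      case True
      obtain z where z: "z > w" "z < u" "h u - h w = (u - w) * h' z"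
        using MVT2[OF True, of h h'] D w by force
      have "w powr (s-1) \<le> z powr (s-1)" using z w s by (intro powr_mono2) auto
      moreover have "s > 1 \<Longrightarrow> w powr (s-1) < z powr (s-1)" using z w s by (intro powr_less_mono2) auto
      ultimately have "h' z \<ge> 0" "s > 1 \<Longrightarrow> h' z > 0" using s unfolding h'_def by auto
      then show ?thesis using z True by (auto simp: \<open>h u - h w = (u - w) * h' z\<close>)
    next
      case False2: False
      then have uw: "u < w" using \<open>u \<noteq> w\<close> by auto
      obtain z where z: "z > u" "z < w" "h w - h u = (w - u) * h' z"
        using MVT2[OF uw, of h h'] D u by force
      have "z powr (s-1) \<le> w powr (s-1)" using z u s by (intro powr_mono2) auto
      moreover have "s > 1 \<Longrightarrow> z powr (s-1) < w powr (s-1)" using z u s by (intro powr_less_mono2) auto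
      ultimately have "h' z \<le> 0" "s > 1 \<Longrightarrow> h' z < 0" using s unfolding h'_def by auto
      moreover have "h u - h w = (w - u) * (- h' z)" using z(3) by (simp add: algebra_simps)
      ultimately show ?thesis using uw by (auto simp: mult_le_0_iff mult_less_0_iff)
    qed
  qed
  then show "u powr s \<ge> w powr s + s * w powr (s-1) * (u - w)"
    and "s > 1 \<Longrightarrow> u \<noteq> w \<Longrightarrow> u powr s > w powr s + s * w powr (s-1) * (u - w)"
    unfolding h_def by (auto simp: algebra_simps)
qed

lemma tangent_wpos:
  fixes u w s :: real
  assumes s: "s \<ge> 1" and w: "w > 0"
  shows "\<bar>u\<bar> powr s \<ge> w powr s + s * w powr (s-1) * (u - w)"
    and "s > 1 \<Longrightarrow> u \<noteq> w \<Longrightarrow> \<bar>u\<bar> powr s > w powr s + s * w powr (s-1) * (u - w)"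
proof -
  have "w powr (s-1) * w = w powr s" 
  proof -
    have "w powr (s-1) * w powr 1 = w powr (s - 1 + 1)" by (rule powr_add[symmetric])
    then show ?thesis using w by simp
  qed
  have neg: "w powr s + s * w powr (s-1) * (u - w) \<le> (1 - s) * w powr s" if "u \<le> 0"
  proof -
    have "s * w powr (s-1) * (u - w) \<le> s * w powr (s-1) * (0 - w)"
      using that s by (intro mult_left_mono) auto
    also have "\<dots> = - s * w powr s" using \<open>w powr (s-1) * w = w powr s\<close> by (simp add: algebra_simps)
    finally show ?thesis by (simp add: algebra_simps)
  qed
  have "\<bar>u\<bar> powr s \<ge> w powr s + s * w powr (s-1) * (u - w) \<and>
        (s > 1 \<longrightarrow> u \<noteq> w \<longrightarrow> \<bar>u\<bar> powr s > w powr s + s * w powr (s-1) * (u - w))"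
  proof (cases "u > 0")
    case True then show ?thesis using tangent_pos[OF s w True] by auto
  next
    case False
    then have "w powr s + s * w powr (s-1) * (u - w) \<le> (1 - s) * w powr s" using neg by auto
    moreover have "(1 - s) * w powr s \<le> 0" "s > 1 \<Longrightarrow> (1 - s) * w powr s < 0" using s w
      by (auto simp: mult_le_0_iff mult_less_0_iff)
    moreover have "\<bar>u\<bar> powr s \<ge> 0" by simp
    ultimately show ?thesis by linarith
  qed
  then show "\<bar>u\<bar> powr s \<ge> w powr s + s * w powr (s-1) * (u - w)"
    and "s > 1 \<Longrightarrow> u \<noteq> w \<Longrightarrow> \<bar>u\<bar> powr s > w powr s + s * w powr (s-1) * (u - w)" by auto
qed

lemma tangent_abs:
  fixes u w s :: real
  assumes s: "s \<ge> 1"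
  shows "\<bar>u\<bar> powr s \<ge> \<bar>w\<bar> powr s + s * sgn w * \<bar>w\<bar> powr (s-1) * (u - w)"
    and "s > 1 \<Longrightarrow> u \<noteq> w \<Longrightarrow> \<bar>u\<bar> powr s > \<bar>w\<bar> powr s + s * sgn w * \<bar>w\<bar> powr (s-1) * (u - w)"
proof -
  have "\<bar>u\<bar> powr s \<ge> \<bar>w\<bar> powr s + s * sgn w * \<bar>w\<bar> powr (s-1) * (u - w) \<and>
    (s > 1 \<longrightarrow> u \<noteq> w \<longrightarrow> \<bar>u\<bar> powr s > \<bar>w\<bar> powr s + s * sgn w * \<bar>w\<bar> powr (s-1) * (u - w))"
  proof (cases w "0::real" rule: linorder_cases)
    case less
    have "-w > 0" using less by simp
    from tangent_wpos[OF s this, of "-u"] show ?thesis using less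
      by (auto simp: algebra_simps)
  next
    case equal
    then show ?thesis using s by auto
  next
    case greater
    from tangent_wpos[OF s greater, of u] show ?thesis using greater by auto
  qed
  then show "\<bar>u\<bar> powr s \<ge> \<bar>w\<bar> powr s + s * sgn w * \<bar>w\<bar> powr (s-1) * (u - w)"
    and "s > 1 \<Longrightarrow> u \<noteq> w \<Longrightarrow> \<bar>u\<bar> powr s > \<bar>w\<bar> powr s + s * sgn w * \<bar>w\<bar> powr (s-1) * (u - w)" by auto
qed


lemma sum_lin: "(\<Sum>i\<in>{a..a+n}. real i - real a) = real n * (real n + 1) / 2"
  by (induction n) (auto simp: sum.cl_ivl_Suc field_simps)

lemma sum_lin2: "(\<Sum>i\<in>{a..a+n}. real (a+n) - real i) = real n * (real n + 1) / 2"
proof -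
  have "(\<Sum>i\<in>{a..a+n}. real (a+n) - real i) = (\<Sum>i\<in>{a..a+n}. real n - (real i - real a))"
    by (rule sum.cong) auto
  also have "\<dots> = (\<Sum>i\<in>{a..a+n}. real n) - (\<Sum>i\<in>{a..a+n}. real i - real a)"
    by (rule sum_subtractf)
  also have "\<dots> = (real n + 1) * real n - real n * (real n + 1) / 2"
    unfolding sum_lin by simp
  finally show ?thesis by (simp add: field_simps)
qed

lemma sum_id_ivl: "(\<Sum>i\<in>{a..a+n}. real i) = (real n + 1) * (real a + real (a+n)) / 2"
proof -
  have "(\<Sum>i\<in>{a..a+n}. real i) = (\<Sum>i\<in>{a..a+n}. (real i - real a) + real a)" by simp
  also have "\<dots> = (\<Sum>i\<in>{a..a+n}. (real i - real a)) + (\<Sum>i\<in>{a..a+n}. real a)"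
    by (rule sum.distrib)
  also have "\<dots> = real n * (real n + 1) / 2 + (real n + 1) * real a"
    unfolding sum_lin by simp
  finally show ?thesis by (simp add: field_simps)
qed

lemma chord:
  fixes \<phi> d :: "real \<Rightarrow> real" and a b i :: real
  assumes tg: "\<And>x y. \<phi> y \<ge> \<phi> x + d x * (y - x)"
    and ai: "a \<le> i" and ib: "i \<le> b"
  shows "(b - a) * \<phi> i \<le> (b - i) * \<phi> a + (i - a) * \<phi> b"
    and "a < i \<Longrightarrow> i < b \<Longrightarrow> (\<phi> a > \<phi> i + d i * (a - i) \<or> \<phi> b > \<phi> i + d i * (b - i)) \<Longrightarrow>
         (b - a) * \<phi> i < (b - i) * \<phi> a + (i - a) * \<phi> b"
proof -
  have e: "(b - i) * (\<phi> i + d i * (a - i)) + (i - a) * (\<phi> i + d i * (b - i)) = (b - a) * \<phi> i"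
    by (simp add: algebra_simps)
  have 1: "(b - i) * (\<phi> i + d i * (a - i)) \<le> (b - i) * \<phi> a"
    using tg[of i a] ib by (intro mult_left_mono) auto
  have 2: "(i - a) * (\<phi> i + d i * (b - i)) \<le> (i - a) * \<phi> b"
    using tg[of i b] ai by (intro mult_left_mono) auto
  show "(b - a) * \<phi> i \<le> (b - i) * \<phi> a + (i - a) * \<phi> b" using 1 2 e by linarith
  assume "a < i" "i < b" "\<phi> a > \<phi> i + d i * (a - i) \<or> \<phi> b > \<phi> i + d i * (b - i)"
  then have "(b - i) * (\<phi> i + d i * (a - i)) < (b - i) * \<phi> a \<or> (i - a) * (\<phi> i + d i * (b - i)) < (i - a) * \<phi> b"
    by auto
  then show "(b - a) * \<phi> i < (b - i) * \<phi> a + (i - a) * \<phi> b" using 1 2 e by linarith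
qed

lemma HH:
  fixes \<phi> d :: "real \<Rightarrow> real" and a n :: nat
  assumes tg: "\<And>x y. \<phi> y \<ge> \<phi> x + d x * (y - x)"
  shows "(\<Sum>i\<in>{a..a+n}. \<phi> (real i)) * 2 \<le> (real n + 1) * (\<phi> (real a) + \<phi> (real (a+n)))"
    and "n \<ge> 2 \<Longrightarrow> (\<phi> (real a) > \<phi> (real a + 1) + d (real a + 1) * (- 1) \<or>
            \<phi> (real (a+n)) > \<phi> (real a + 1) + d (real a + 1) * (real n - 1)) \<Longrightarrow>
         (\<Sum>i\<in>{a..a+n}. \<phi> (real i)) * 2 < (real n + 1) * (\<phi> (real a) + \<phi> (real (a+n)))"
proof -
  let ?A = "real a" and ?B = "real (a+n)"
  have ch: "real n * \<phi> (real i) \<le> (?B - real i) * \<phi> ?A + (real i - ?A) * \<phi> ?B" if "i \<in> {a..a+n}" for i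
    using chord(1)[OF tg, of ?A "real i" ?B] that by auto
  have sumR: "(\<Sum>i\<in>{a..a+n}. (?B - real i) * \<phi> ?A + (real i - ?A) * \<phi> ?B)
      = real n * (real n + 1) / 2 * (\<phi> ?A + \<phi> ?B)"
  proof -
    have "(\<Sum>i\<in>{a..a+n}. (?B - real i) * \<phi> ?A + (real i - ?A) * \<phi> ?B)
      = (\<Sum>i\<in>{a..a+n}. (?B - real i)) * \<phi> ?A + (\<Sum>i\<in>{a..a+n}. (real i - ?A)) * \<phi> ?B"
      by (simp only: sum.distrib sum_distrib_right)
    also have "\<dots> = real n * (real n + 1) / 2 * (\<phi> ?A + \<phi> ?B)"
      unfolding sum_lin sum_lin2 by (simp add: field_simps)
    finally show ?thesis .
  qed
  have main: "real n * (\<Sum>i\<in>{a..a+n}. \<phi> (real i)) \<le> real n * ((real n + 1) * (\<phi> ?A + \<phi> ?B) / 2)"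
  proof -
    have "real n * (\<Sum>i\<in>{a..a+n}. \<phi> (real i)) = (\<Sum>i\<in>{a..a+n}. real n * \<phi> (real i))"
      by (simp add: sum_distrib_left)
    also have "\<dots> \<le> (\<Sum>i\<in>{a..a+n}. (?B - real i) * \<phi> ?A + (real i - ?A) * \<phi> ?B)"
      by (rule sum_mono) (rule ch)
    finally show ?thesis using sumR by (simp add: field_simps)
  qed
  show "(\<Sum>i\<in>{a..a+n}. \<phi> (real i)) * 2 \<le> (real n + 1) * (\<phi> ?A + \<phi> ?B)"
  proof (cases "n = 0")
    case True then show ?thesis by simp
  next
    case False
    then have "(\<Sum>i\<in>{a..a+n}. \<phi> (real i)) \<le> ((real n + 1) * (\<phi> ?A + \<phi> ?B) / 2)"
      using main by (simp add: mult_le_cancel_left_pos)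
    then show ?thesis by simp
  qed
  assume n2: "n \<ge> 2" and st: "\<phi> ?A > \<phi> (?A + 1) + d (?A + 1) * (- 1) \<or>
            \<phi> ?B > \<phi> (?A + 1) + d (?A + 1) * (real n - 1)"
  have ch0: "(?B - ?A) * \<phi> (?A + 1) < (?B - (?A + 1)) * \<phi> ?A + ((?A + 1) - ?A) * \<phi> ?B"
    by (rule chord(2)[OF tg]) (use n2 st in auto)
  have ch1: "real n * \<phi> (real (a+1)) < (?B - real (a+1)) * \<phi> ?A + (real (a+1) - ?A) * \<phi> ?B"
    using ch0 by (simp add: add.commute)
  have "real n * (\<Sum>i\<in>{a..a+n}. \<phi> (real i)) = (\<Sum>i\<in>{a..a+n}. real n * \<phi> (real i))"
    by (simp add: sum_distrib_left)
  also have "\<dots> < (\<Sum>i\<in>{a..a+n}. (?B - real i) * \<phi> ?A + (real i - ?A) * \<phi> ?B)"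
  proof (rule sum_strict_mono_ex1)
    show "\<exists>i\<in>{a..a+n}. real n * \<phi> (real i) < (?B - real i) * \<phi> ?A + (real i - ?A) * \<phi> ?B"
      by (rule bexI[of _ "a+1"]) (use ch1 n2 in auto)
  qed (use ch in auto)
  finally have "real n * (\<Sum>i\<in>{a..a+n}. \<phi> (real i)) < real n * ((real n + 1) * (\<phi> ?A + \<phi> ?B) / 2)"
    using sumR by (simp add: field_simps)
  then have "(\<Sum>i\<in>{a..a+n}. \<phi> (real i)) < ((real n + 1) * (\<phi> ?A + \<phi> ?B) / 2)"
    using n2 by (simp add: mult_less_cancel_left_pos)
  then show "(\<Sum>i\<in>{a..a+n}. \<phi> (real i)) * 2 < (real n + 1) * (\<phi> ?A + \<phi> ?B)" by simp
qed

lemma pair_ineq: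
  fixes m s :: real and k l :: nat
  assumes s: "s \<ge> 1"
  defines "f \<equiv> (\<lambda>i::nat. \<bar>real i - m\<bar> powr s)"
  shows "2 * (\<Sum>i\<in>{min k l..max k l}. f i) \<le> (1 + \<bar>real k - real l\<bar>) * (f k + f l)"
    and "\<bar>real k - real l\<bar> \<ge> 2 \<Longrightarrow> (s > 1 \<or> (real (min k l) < m \<and> m < real (max k l))) \<Longrightarrow>
         2 * (\<Sum>i\<in>{min k l..max k l}. f i) < (1 + \<bar>real k - real l\<bar>) * (f k + f l)"
proof -
  define \<phi> where "\<phi> = (\<lambda>x::real. \<bar>x - m\<bar> powr s)"
  define d where "d = (\<lambda>x::real. s * sgn (x - m) * \<bar>x - m\<bar> powr (s - 1))"
  have tg: "\<phi> y \<ge> \<phi> x + d x * (y - x)" for x y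
    using tangent_abs(1)[OF s, where u="y - m" and w="x - m"] unfolding \<phi>_def d_def by simp
  have tgs: "s > 1 \<Longrightarrow> y \<noteq> x \<Longrightarrow> \<phi> y > \<phi> x + d x * (y - x)" for x y
    using tangent_abs(2)[OF s, where u="y - m" and w="x - m"] unfolding \<phi>_def d_def by simp
  define a where "a = min k l"
  define n where "n = max k l - min k l"
  have mx: "max k l = a + n" unfolding a_def n_def by auto
  have rn: "real n + 1 = 1 + \<bar>real k - real l\<bar>" unfolding n_def by (auto simp: of_nat_diff)
  have fs: "f k + f l = \<phi> (real a) + \<phi> (real (a+n))"
    unfolding f_def \<phi>_def a_def n_def by (cases "k \<le> l") (auto simp: min_def max_def)
  have sm: "(\<Sum>i\<in>{min k l..max k l}. f i) = (\<Sum>i\<in>{a..a+n}. \<phi> (real i))"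
    unfolding mx a_def[symmetric] f_def \<phi>_def by simp
  show "2 * (\<Sum>i\<in>{min k l..max k l}. f i) \<le> (1 + \<bar>real k - real l\<bar>) * (f k + f l)"
    using HH(1)[OF tg, of a n] unfolding sm fs rn[symmetric] by (simp add: mult.commute)
  assume d2: "\<bar>real k - real l\<bar> \<ge> 2" and cnd: "s > 1 \<or> (real (min k l) < m \<and> m < real (max k l))"
  have n2: "n \<ge> 2" using d2 rn by linarith
  have st: "\<phi> (real a) > \<phi> (real a + 1) + d (real a + 1) * (- 1) \<or>
            \<phi> (real (a+n)) > \<phi> (real a + 1) + d (real a + 1) * (real n - 1)"
  proof (cases "s > 1")
    case True
    then show ?thesis using tgs[of "real a" "real a + 1"] by auto
  next
    case False
    then have s1: "s = 1" using s by auto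
    have am: "real a < m" "m < real (a+n)" using cnd False mx unfolding a_def by auto
    show ?thesis
    proof (cases "real a + 1" m rule: linorder_cases)
      case less
      then have "\<phi> (real a + 1) + d (real a + 1) * (real n - 1) = m - real (a+n)"
        unfolding \<phi>_def d_def s1 by auto
      moreover have "\<phi> (real (a+n)) = real (a+n) - m" using am unfolding \<phi>_def s1 by auto
      ultimately show ?thesis using am by auto
    next
      case equal
      then show ?thesis using am unfolding \<phi>_def d_def s1 by auto
    next
      case greater
      then have "\<phi> (real a + 1) + d (real a + 1) * (- 1) = real a - m"
        unfolding \<phi>_def d_def s1 by auto
      moreover have "\<phi> (real a) = m - real a" using am unfolding \<phi>_def s1 by auto
      ultimately show ?thesis using am by auto
    qed
  qed
  show "2 * (\<Sum>i\<in>{min k l..max k l}. f i) < (1 + \<bar>real k - real l\<bar>) * (f k + f l)"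
    using HH(2)[OF tg n2 st] unfolding sm fs rn[symmetric] by (simp add: mult.commute)
qed

lemma prod_has_sum:
  fixes p q :: "nat \<Rightarrow> real"
  assumes p0: "\<And>k. 0 \<le> p k" and q0: "\<And>k. 0 \<le> q k"
    and P: "(p has_sum a) UNIV" and Q: "(q has_sum b) UNIV"
  shows "((\<lambda>(k,l). p k * q l) has_sum a * b) UNIV"
proof -
  have inner: "((\<lambda>l. (\<lambda>(k,l). p k * q l) (k, l)) has_sum p k * b) UNIV" for k
    using has_sum_cmult_right[OF Q, of "p k"] by simp
  have outer: "((\<lambda>k. p k * b) has_sum a * b) UNIV"
    using has_sum_cmult_left[OF P] by simp
  have s: "(\<lambda>(k,l). p k * q l) summable_on Sigma UNIV (\<lambda>_. UNIV)"
    by (rule summable_on_SigmaI[OF inner]) (use outer p0 q0 in \<open>auto simp: summable_on_def\<close>)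
  have "((\<lambda>(k,l). p k * q l) has_sum a * b) (Sigma UNIV (\<lambda>_::nat. UNIV::nat set))"
    by (rule has_sum_SigmaI[OF inner outer s])
  then show ?thesis by simp
qed

lemma prob_has_sum:
  assumes "p \<in> prob_seqs" shows "(p has_sum 1) UNIV" "\<And>k. 0 \<le> p k"
  using assms sums_nonneg_imp_has_sum[of p 1] by (auto simp: prob_seqs_def)

lemma R0_nonneg: assumes "\<And>k. 0 \<le> p k" shows "0 \<le> R0 p i"
  unfolding R0_def by (rule infsum_nonneg) (use assms in auto)

lemma card_ivl_real: "real (card {min k l..max k l}) = 1 + \<bar>real k - real l\<bar>"
  by (cases "k \<le> l") (auto simp: min_def max_def of_nat_diff)

lemma R0_mass:
  assumes "p \<in> prob_seqs" shows "(R0 p has_sum 1) UNIV"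
proof -
  note P = prob_has_sum[OF assms]
  have "((\<lambda>(k,l). p k * p l) has_sum 1 * 1) UNIV" by (rule prod_has_sum[OF P(2) P(2) P(1) P(1)])
  moreover have "(\<lambda>(k,l). p k * p l) = (\<lambda>(k,l). p k * p l * (\<Sum>i\<in>{min k l..max k l}. 1) / (1 + \<bar>real k - real l\<bar>))"
  proof -
    have "p k * p l = p k * p l * real (card {min k l..max k l}) / (1 + \<bar>real k - real l\<bar>)" for k l
      unfolding card_ivl_real by (simp add: add_pos_nonneg)
    then show ?thesis by auto
  qed
  ultimately have "((\<lambda>(k,l). p k * p l * (\<Sum>i\<in>{min k l..max k l}. 1) / (1 + \<bar>real k - real l\<bar>)) has_sum 1) UNIV"
    by simp
  from R0_weighted[OF P(2) _ this] show ?thesis by simp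
qed

lemma sum_ivl_mean: "(\<Sum>i\<in>{min k l..max k l}. real i) = (1 + \<bar>real k - real l\<bar>) * (real k + real l) / 2"
proof -
  define a where "a = min k l"
  define n where "n = max k l - min k l"
  have mx: "max k l = a + n" unfolding a_def n_def by auto
  have rn: "real n + 1 = 1 + \<bar>real k - real l\<bar>" unfolding n_def by (auto simp: of_nat_diff)
  have "real a + real (a+n) = real k + real l" unfolding a_def n_def by (cases "k \<le> l") (auto simp: min_def max_def)
  then show ?thesis using sum_id_ivl[of a n] unfolding mx a_def[symmetric] rn by simp
qed

lemma R0_mean:
  assumes "p \<in> prob_seqs" and "((\<lambda>k. real k * p k) has_sum m) UNIV"
  shows "((\<lambda>i. real i * R0 p i) has_sum m) UNIV"
proof -
  note P = prob_has_sum[OF assms(1)]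
  have n: "0 \<le> real k * p k" for k using P(2)[of k] by simp
  have h1: "((\<lambda>(k,l). (real k * p k) * p l) has_sum m * 1) UNIV" by (rule prod_has_sum[OF n P(2) assms(2) P(1)])
  have h2: "((\<lambda>(k,l). p k * (real l * p l)) has_sum 1 * m) UNIV" by (rule prod_has_sum[OF P(2) n P(1) assms(2)])
  have "((\<lambda>kl. ((\<lambda>(k,l). (real k * p k) * p l) kl + (\<lambda>(k,l). p k * (real l * p l)) kl) / 2) has_sum (m * 1 + 1 * m) / 2) UNIV"
    using has_sum_divide_const[OF has_sum_add[OF h1 h2], of 2] by simp
  moreover have "(\<lambda>kl. ((\<lambda>(k,l). (real k * p k) * p l) kl + (\<lambda>(k,l). p k * (real l * p l)) kl) / 2)
     = (\<lambda>(k,l). p k * p l * (\<Sum>i\<in>{min k l..max k l}. real i) / (1 + \<bar>real k - real l\<bar>))"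
  proof -
    have "((real k * p k) * p l + p k * (real l * p l)) / 2 = p k * p l * (\<Sum>i\<in>{min k l..max k l}. real i) / (1 + \<bar>real k - real l\<bar>)" for k l
    proof -
      have "(1 + \<bar>real k - real l\<bar>) > 0" by (simp add: add_pos_nonneg)
      then show ?thesis unfolding sum_ivl_mean by (simp add: field_simps)
    qed
    then show ?thesis by (auto simp: fun_eq_iff simp del: of_nat_sum)
  qed
  ultimately have "((\<lambda>(k,l). p k * p l * (\<Sum>i\<in>{min k l..max k l}. real i) / (1 + \<bar>real k - real l\<bar>)) has_sum m) UNIV"
    by simp
  from R0_weighted[OF P(2) _ this] show ?thesis by simp
qed

lemma R0_moment:
  fixes s m M :: real
  assumes s: "s \<ge> 1" and p: "p \<in> prob_seqs"
    and M: "((\<lambda>k. \<bar>real k - m\<bar> powr s * p k) has_sum M) UNIV"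
  shows "\<exists>S. ((\<lambda>i. \<bar>real i - m\<bar> powr s * R0 p i) has_sum S) UNIV \<and> S \<le> M \<and>
    (S = M \<longrightarrow> (\<forall>k l. p k > 0 \<longrightarrow> p l > 0 \<longrightarrow> \<bar>real k - real l\<bar> \<ge> 2 \<longrightarrow>
        \<not> (s > 1 \<or> (real (min k l) < m \<and> m < real (max k l)))))"
proof -
  define f where "f = (\<lambda>i::nat. \<bar>real i - m\<bar> powr s)"
  note P = prob_has_sum[OF p]
  define c where "c = (\<lambda>(k,l). p k * p l * (\<Sum>i\<in>{min k l..max k l}. f i) / (1 + \<bar>real k - real l\<bar>))"
  define e where "e = (\<lambda>(k::nat,l::nat). p k * p l * (f k + f l) / 2)"
  have n: "0 \<le> f k * p k" for k using P(2)[of k] by (simp add: f_def)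
  have M': "((\<lambda>k. f k * p k) has_sum M) UNIV" using M by (simp add: f_def)
  have h1: "((\<lambda>(k,l). (f k * p k) * p l) has_sum M * 1) UNIV" by (rule prod_has_sum[OF n P(2) M' P(1)])
  have h2: "((\<lambda>(k,l). p k * (f l * p l)) has_sum 1 * M) UNIV" by (rule prod_has_sum[OF P(2) n P(1) M'])
  have "((\<lambda>kl. ((\<lambda>(k,l). (f k * p k) * p l) kl + (\<lambda>(k,l). p k * (f l * p l)) kl) / 2) has_sum (M * 1 + 1 * M) / 2) UNIV"
    using has_sum_divide_const[OF has_sum_add[OF h1 h2], of 2] by simp
  moreover have "(\<lambda>kl. ((\<lambda>(k,l). (f k * p k) * p l) kl + (\<lambda>(k,l). p k * (f l * p l)) kl) / 2) = e"
    by (auto simp: e_def fun_eq_iff algebra_simps)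
  ultimately have eM: "(e has_sum M) UNIV" by simp
  have pos: "(1 + \<bar>real k - real l\<bar>) > 0" for k l :: nat by (simp add: add_pos_nonneg)
  have ce: "c kl \<le> e kl" for kl
  proof -
    obtain k l where kl: "kl = (k,l)" by fastforce
    have "2 * (\<Sum>i\<in>{min k l..max k l}. f i) \<le> (1 + \<bar>real k - real l\<bar>) * (f k + f l)"
      using pair_ineq(1)[OF s, of m k l] unfolding f_def .
    then have "(\<Sum>i\<in>{min k l..max k l}. f i) / (1 + \<bar>real k - real l\<bar>) \<le> (f k + f l) / 2"
      using pos[of k l] by (simp add: field_simps)
    then show ?thesis unfolding kl c_def e_def using P(2)[of k] P(2)[of l]
      by (simp add: mult_left_mono mult.assoc times_divide_eq_right[symmetric] del: times_divide_eq_right)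
  qed
  have c0: "0 \<le> c kl" for kl
    using P(2) pos by (auto simp: c_def f_def intro!: divide_nonneg_pos sum_nonneg mult_nonneg_nonneg split: prod.splits)
  have cs: "c summable_on UNIV"
    by (rule summable_on_comparison_test[of e]) (use eM ce c0 in \<open>auto simp: summable_on_def\<close>)
  define S where "S = infsum c UNIV"
  have cS: "(c has_sum S) UNIV" using cs unfolding S_def by (rule has_sum_infsum)
  have R: "((\<lambda>i. f i * R0 p i) has_sum S) UNIV"
    by (rule R0_weighted[OF P(2) _ cS[unfolded c_def]]) (simp add: f_def)
  have SM: "S \<le> M" by (rule has_sum_mono[OF cS eM ce])
  have eq: "\<forall>k l. p k > 0 \<longrightarrow> p l > 0 \<longrightarrow> \<bar>real k - real l\<bar> \<ge> 2 \<longrightarrow>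
        \<not> (s > 1 \<or> (real (min k l) < m \<and> m < real (max k l)))" if "S = M"
  proof (intro allI impI notI)
    fix k l assume pk: "p k > 0" and pl: "p l > 0" and d2: "\<bar>real k - real l\<bar> \<ge> 2"
      and cnd: "s > 1 \<or> (real (min k l) < m \<and> m < real (max k l))"
    have "((\<lambda>kl. e kl - c kl) has_sum M - S) UNIV" 
    proof -
      have "((\<lambda>x. - c x) has_sum - S) UNIV" using cS by (simp add: has_sum_uminus)
      from has_sum_add[OF eM this] show ?thesis by simp
    qed
    then have z: "e (k,l) - c (k,l) = 0"
      by (rule nonneg_has_sum_le_0D) (use that ce in \<open>auto simp: algebra_simps\<close>)
    have "2 * (\<Sum>i\<in>{min k l..max k l}. f i) < (1 + \<bar>real k - real l\<bar>) * (f k + f l)"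
      using pair_ineq(2)[OF s, of k l m, OF d2 cnd] unfolding f_def .
    then have "(\<Sum>i\<in>{min k l..max k l}. f i) / (1 + \<bar>real k - real l\<bar>) < (f k + f l) / 2"
      using pos[of k l] by (simp add: field_simps)
    then have "c (k,l) < e (k,l)" unfolding c_def e_def using pk pl
      by (simp add: mult.assoc times_divide_eq_right[symmetric] del: times_divide_eq_right)
    then show False using z by simp
  qed
  show ?thesis using R SM eq unfolding f_def by blast
qed

lemma support_two:
  fixes m :: real
  assumes p: "p \<in> prob_seqs" and mean: "((\<lambda>k. real k * p k) has_sum m) UNIV"
    and cond: "\<forall>k l. p k > 0 \<longrightarrow> p l > 0 \<longrightarrow> \<bar>real k - real l\<bar> \<ge> 2 \<longrightarrow>
                 \<not> (real (min k l) < m \<and> m < real (max k l))"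
  shows "\<exists>a. \<forall>k. p k > 0 \<longrightarrow> k = a \<or> k = Suc a"
proof -
  note P = prob_has_sum[OF p]
  have c0: "((\<lambda>k. (real k - m) * p k) has_sum 0) UNIV"
  proof -
    have "((\<lambda>k. - (m * p k)) has_sum - (m * 1)) UNIV"
      using has_sum_cmult_right[OF P(1), of m] by (simp add: has_sum_uminus)
    from has_sum_add[OF mean this] show ?thesis by (simp add: algebra_simps)
  qed
  have c1: "((\<lambda>k. (m - real k) * p k) has_sum 0) UNIV"
    using has_sum_cmult_right[OF c0, of "-1"] by (simp add: algebra_simps)
  have A: "\<exists>j. p j > 0 \<and> real j < m" if "p l > 0" "real l > m" for l
  proof (rule ccontr)
    assume "\<not> ?thesis"
    then have nn: "0 \<le> (real j - m) * p j" for j using P(2)[of j] by (cases "p j > 0") auto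
    have "(real l - m) * p l = 0" by (rule nonneg_has_sum_le_0D[OF c0]) (use nn in auto)
    then show False using that by simp
  qed
  have B: "\<exists>j. p j > 0 \<and> real j > m" if "p l > 0" "real l < m" for l
  proof (rule ccontr)
    assume "\<not> ?thesis"
    then have nn: "0 \<le> (m - real j) * p j" for j using P(2)[of j] by (cases "p j > 0") auto
    have "(m - real l) * p l = 0" by (rule nonneg_has_sum_le_0D[OF c1]) (use nn in auto)
    then show False using that by simp
  qed
  have step1: "l \<le> Suc k" if pk: "p k > 0" and pl: "p l > 0" and kl: "k \<le> l" for k l
  proof (rule ccontr)
    assume "\<not> l \<le> Suc k"
    then have kl2: "real l \<ge> real k + 2" by simp
    have mm: "min k l = k" "max k l = l" using that(3) by auto
    have "\<bar>real k - real l\<bar> \<ge> 2" using kl2 by auto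
    then have "\<not> (real k < m \<and> m < real l)" using cond that(1,2) mm by metis
    then consider "m \<le> real k" | "real l \<le> m" by linarith
    then show False
    proof cases
      case 1
      then obtain j where j: "p j > 0" "real j < m" using A[OF pl] kl2 by auto
      have "\<bar>real j - real l\<bar> \<ge> 2" using j 1 kl2 by auto
      moreover have "min j l = j" "max j l = l" using j 1 kl2 by auto
      ultimately show False using cond j pl 1 kl2 by force
    next
      case 2
      then obtain j where j: "p j > 0" "real j > m" using B[OF pk] kl2 by auto
      have "\<bar>real k - real j\<bar> \<ge> 2" using j 2 kl2 by auto
      moreover have "min k j = k" "max k j = j" using j 2 kl2 by auto
      ultimately show False using cond j pk 2 kl2 by force
    qed
  qed
  have ex: "\<exists>k. p k > 0"
  proof (rule ccontr)
    assume "\<not> ?thesis"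
    then have "p = (\<lambda>_. 0)" using P(2) by (metis antisym not_less)
    then show False using has_sum_unique[OF P(1), of 0] by (simp add: has_sum_0)
  qed
  define a where "a = (LEAST k. p k > 0)"
  have pa: "p a > 0" unfolding a_def using ex by (metis LeastI)
  have "k = a \<or> k = Suc a" if "p k > 0" for k
  proof -
    have "a \<le> k" unfolding a_def using that by (rule Least_le)
    then show ?thesis using step1[OF pa that] by auto
  qed
  then show ?thesis by blast
qed

lemma fixed_two:
  assumes p: "p \<in> prob_seqs" and sup: "\<forall>k. p k > 0 \<longrightarrow> k = a \<or> k = Suc a"
  shows "R0 p = p"
proof -
  note P = prob_has_sum[OF p]
  have z: "p k = 0" if "k \<noteq> a" "k \<noteq> Suc a" for k
    using sup that P(2)[of k] by force
  have z': "k \<in> {a, Suc a}" if "p k \<noteq> 0" for k using z that by blast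
  have "infsum p UNIV = infsum p {a, Suc a}"
    by (rule infsum_cong_neutral) (use z in auto)
  then have one: "p a + p (Suc a) = 1" using infsumI[OF P(1)] by simp
  let ?t = "\<lambda>(k::nat, l::nat). p k * p l / (1 + \<bar>real k - real l\<bar>)"
  let ?Q = "{a, Suc a} \<times> {a, Suc a}"
  have R: "R0 p i = sum ?t ({(k, l). min k l \<le> i \<and> i \<le> max k l} \<inter> ?Q)" for i
  proof -
    have "R0 p i = infsum ?t ({(k, l). min k l \<le> i \<and> i \<le> max k l} \<inter> ?Q)"
      unfolding R0_def by (rule infsum_cong_neutral) (use z' in \<open>auto dest!: z'\<close>)
    then show ?thesis by simp
  qed
  show ?thesis
  proof
    fix i
    consider "i = a" | "i = Suc a" | "i \<noteq> a \<and> i \<noteq> Suc a" by blast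
    then show "R0 p i = p i"
    proof cases
      case 1
      have "{(k, l). min k l \<le> i \<and> i \<le> max k l} \<inter> ?Q = {(a,a), (a, Suc a), (Suc a, a)}"
        using 1 by auto
      then have "R0 p i = p a * p a + p a * p (Suc a) / 2 + p (Suc a) * p a / 2" unfolding R by simp
      also have "\<dots> = p a * (p a + p (Suc a))" by (simp add: algebra_simps)
      finally show ?thesis using 1 one by simp
    next
      case 2
      have "{(k, l). min k l \<le> i \<and> i \<le> max k l} \<inter> ?Q = {(Suc a, Suc a), (a, Suc a), (Suc a, a)}"
        using 2 by auto
      then have "R0 p i = p (Suc a) * p (Suc a) + p a * p (Suc a) / 2 + p (Suc a) * p a / 2" unfolding R by simp
      also have "\<dots> = p (Suc a) * (p a + p (Suc a))" by (simp add: algebra_simps)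
      finally show ?thesis using 2 one by simp
    next
      case 3
      have "{(k, l). min k l \<le> i \<and> i \<le> max k l} \<inter> ?Q = {}"
        using 3 by auto
      then show ?thesis unfolding R using z 3 by simp
    qed
  qed
qed

lemma abs_le_powr: assumes "r \<ge> 1" shows "\<bar>x::real\<bar> powr 1 \<le> 1 + \<bar>x\<bar> powr r"
proof (cases "\<bar>x\<bar> \<le> 1")
  case True then show ?thesis by (simp add: add_increasing2)
next
  case False
  then have "\<bar>x\<bar> powr 1 \<le> \<bar>x\<bar> powr r" using assms by (intro powr_mono) auto
  then show ?thesis by simp
qed

lemma Mset_facts:
  assumes "p \<in> Mset r m C"
  shows "p \<in> prob_seqs" "((\<lambda>k. real k * p k) has_sum m) UNIV" "has_moment m r p" "moment m r p \<le> C"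
    "\<And>k. 0 \<le> p k" "(p has_sum 1) UNIV"
proof -
  show p: "p \<in> prob_seqs" using assms by (auto simp: Mset_def)
  show "has_moment m r p" "moment m r p \<le> C" using assms by (auto simp: Mset_def)
  show "\<And>k. 0 \<le> p k" "(p has_sum 1) UNIV" using prob_has_sum[OF p] by auto
  have "(\<lambda>k. real k * p k) sums m" using assms by (auto simp: Mset_def intro: summable_sums[THEN sums_unique2[THEN subst]])
  then show "((\<lambda>k. real k * p k) has_sum m) UNIV"
    by (rule sums_nonneg_imp_has_sum) (use prob_has_sum[OF p] in auto)
qed

lemma has_moment_1:
  assumes "r \<ge> 1" "p \<in> Mset r m C" shows "has_moment m 1 p"
proof -
  note F = Mset_facts[OF assms(2)]
  have "summable (\<lambda>k. p k + \<bar>real k - m\<bar> powr r * p k)"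
    using F(3) F(6) has_sum_imp_sums[OF F(6)] unfolding has_moment_def
    by (intro summable_add) (auto simp: sums_iff)
  then show ?thesis unfolding has_moment_def
  proof (rule summable_comparison_test[rotated], intro exI allI impI)
    fix k :: nat
    have "\<bar>real k - m\<bar> powr 1 * p k \<le> (1 + \<bar>real k - m\<bar> powr r) * p k"
      by (rule mult_right_mono[OF abs_le_powr[OF assms(1)] F(5)])
    then show "norm (\<bar>real k - m\<bar> powr 1 * p k) \<le> p k + \<bar>real k - m\<bar> powr r * p k"
      using F(5)[of k] by (simp add: algebra_simps)
  qed
qed

lemma R0_part:
  assumes r: "r > 1" and pM: "p \<in> Mset r m C" and s: "s \<in> {1, r}"
  shows "has_moment m s p \<and> has_moment m s (R0 p)
          \<and> moment m s (R0 p) \<le> moment m s p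
          \<and> (moment m s (R0 p) = moment m s p \<longleftrightarrow> R0 p = p)"
proof -
  note F = Mset_facts[OF pM]
  have s1: "s \<ge> 1" using s r by auto
  have hm: "has_moment m s p" using s has_moment_1[OF _ pM] F(3) r by auto
  have Ms: "((\<lambda>k. \<bar>real k - m\<bar> powr s * p k) has_sum moment m s p) UNIV"
    using hm unfolding has_moment_def moment_def
    by (intro sums_nonneg_imp_has_sum summable_sums) (use F(5) in auto)
  obtain S where S: "((\<lambda>i. \<bar>real i - m\<bar> powr s * R0 p i) has_sum S) UNIV" "S \<le> moment m s p"
    and eq: "S = moment m s p \<Longrightarrow> (\<forall>k l. p k > 0 \<longrightarrow> p l > 0 \<longrightarrow> \<bar>real k - real l\<bar> \<ge> 2 \<longrightarrow>
        \<not> (s > 1 \<or> (real (min k l) < m \<and> m < real (max k l))))"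
    using R0_moment[OF s1 F(1) Ms] by blast
  have sumsS: "(\<lambda>i. \<bar>real i - m\<bar> powr s * R0 p i) sums S" by (rule has_sum_imp_sums[OF S(1)])
  have hmR: "has_moment m s (R0 p)" using sumsS unfolding has_moment_def by (auto simp: sums_iff)
  have mR: "moment m s (R0 p) = S" using sumsS unfolding moment_def by (auto simp: sums_iff)
  have iff: "moment m s (R0 p) = moment m s p \<longleftrightarrow> R0 p = p"
  proof
    assume "moment m s (R0 p) = moment m s p"
    then have c: "\<forall>k l. p k > 0 \<longrightarrow> p l > 0 \<longrightarrow> \<bar>real k - real l\<bar> \<ge> 2 \<longrightarrow>
                 \<not> (real (min k l) < m \<and> m < real (max k l))" using eq mR by auto
    obtain a where "\<forall>k. p k > 0 \<longrightarrow> k = a \<or> k = Suc a" using support_two[OF F(1) F(2) c] by blast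
    then show "R0 p = p" by (rule fixed_two[OF F(1)])
  qed simp
  show ?thesis using hm hmR mR S(2) iff by simp
qed

lemma finite_below: "finite {k::nat. real k < m}"
proof (rule finite_subset)
  show "{k::nat. real k < m} \<subseteq> {..<nat \<lceil>m\<rceil>}"
  proof
    fix k assume "k \<in> {k::nat. real k < m}"
    then have "real k < m" by simp
    then have "int k < \<lceil>m\<rceil>" by linarith
    then show "k \<in> {..<nat \<lceil>m\<rceil>}" by simp
  qed
qed simp

definition Fm :: "real \<Rightarrow> (nat \<Rightarrow> real) \<Rightarrow> real" where
  "Fm m p = 2 * (\<Sum>k\<in>{k::nat. real k < m}. (m - real k) * p k)"

lemma M1_formula:
  fixes m :: real
  assumes nn: "\<And>k. 0 \<le> p k" and mass: "(p has_sum 1) UNIV"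
    and mean: "((\<lambda>k. real k * p k) has_sum m) UNIV" and hm: "has_moment m 1 p"
  shows "moment m 1 p = Fm m p"
proof -
  define Q where "Q = {k::nat. real k < m}"
  have fQ: "finite Q" unfolding Q_def by (rule finite_below)
  define g where "g = (\<lambda>k. if real k < m then (m - real k) * p k else 0)"
  have "(g has_sum (\<Sum>k\<in>Q. g k)) Q" using fQ by (rule has_sum_finite)
  then have gs: "(g has_sum (\<Sum>k\<in>Q. (m - real k) * p k)) UNIV"
    by (subst has_sum_cong_neutral[where T=Q]) (auto simp: g_def Q_def)
  have Ms: "((\<lambda>k. \<bar>real k - m\<bar> powr 1 * p k) has_sum moment m 1 p) UNIV"
    using hm unfolding has_moment_def moment_def
    by (intro sums_nonneg_imp_has_sum summable_sums) (use nn in auto)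
  have "((\<lambda>k. real k * p k + (- (m * p k)) + 2 * g k) has_sum m + (- (m * 1)) + 2 * (\<Sum>k\<in>Q. (m - real k) * p k)) UNIV"
  proof (intro has_sum_add has_sum_cmult_right mean gs)
    show "((\<lambda>x. - (m * p x)) has_sum - (m * 1)) UNIV"
      using has_sum_cmult_right[OF mass, of m] by (simp add: has_sum_uminus)
  qed
  moreover have "(\<lambda>k. real k * p k + (- (m * p k)) + 2 * g k) = (\<lambda>k. \<bar>real k - m\<bar> powr 1 * p k)"
    by (auto simp: fun_eq_iff g_def algebra_simps)
  ultimately have "((\<lambda>k. \<bar>real k - m\<bar> powr 1 * p k) has_sum 2 * (\<Sum>k\<in>Q. (m - real k) * p k)) UNIV"
    by simp
  with Ms show ?thesis unfolding Fm_def Q_def using has_sum_unique by blast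
qed

lemma convex_comb_sums:
  fixes w :: "nat \<Rightarrow> real"
  assumes "(\<lambda>k. w k * p k) sums a" "(\<lambda>k. w k * q k) sums b"
  shows "(\<lambda>k. w k * (t * p k + (1 - t) * q k)) sums (t * a + (1 - t) * b)"
proof -
  have "(\<lambda>k. t * (w k * p k) + (1 - t) * (w k * q k)) sums (t * a + (1 - t) * b)"
    by (intro sums_add sums_mult assms)
  then show ?thesis by (simp add: algebra_simps)
qed

lemma Mset_convex:
  assumes p: "p \<in> Mset r m C" and q: "q \<in> Mset r m C" and t: "0 \<le> t" "t \<le> 1"
  shows "(\<lambda>k. t * p k + (1 - t) * q k) \<in> Mset r m C"
proof -
  note P = Mset_facts[OF p] and Q = Mset_facts[OF q]
  let ?z = "\<lambda>k. t * p k + (1 - t) * q k"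
  have nn: "0 \<le> ?z k" for k using P(5)[of k] Q(5)[of k] t by simp
  have s1: "?z sums 1" using convex_comb_sums[where w="\<lambda>_. 1" and p=p and a=1 and q=q and b=1 and t=t] has_sum_imp_sums[OF P(6)] has_sum_imp_sums[OF Q(6)]
    by simp
  have s2: "(\<lambda>k. real k * ?z k) sums m"
    using convex_comb_sums[where w=real and p=p and a=m and q=q and b=m and t=t, OF has_sum_imp_sums[OF P(2)] has_sum_imp_sums[OF Q(2)]]
    by (simp add: algebra_simps)
  have pr: "(\<lambda>k. \<bar>real k - m\<bar> powr r * p k) sums moment m r p"
    using P(3) unfolding has_moment_def moment_def by (rule summable_sums)
  have qr: "(\<lambda>k. \<bar>real k - m\<bar> powr r * q k) sums moment m r q"
    using Q(3) unfolding has_moment_def moment_def by (rule summable_sums)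
  have s3: "(\<lambda>k. \<bar>real k - m\<bar> powr r * ?z k) sums (t * moment m r p + (1 - t) * moment m r q)"
    by (rule convex_comb_sums[OF pr qr])
  have "t * moment m r p + (1 - t) * moment m r q \<le> t * C + (1 - t) * C"
    using P(4) Q(4) t by (intro add_mono mult_left_mono) auto
  then have le: "t * moment m r p + (1 - t) * moment m r q \<le> C" by (simp add: algebra_simps)
  show ?thesis unfolding Mset_def prob_seqs_def has_moment_def moment_def
    using nn s1 s2 s3 le by (auto simp: sums_iff)
qed

lemma weight_bound:
  fixes r m \<epsilon> :: real
  assumes r: "r > 1" and m: "m \<ge> 0" and e: "\<epsilon> > 0"
  shows "\<exists>N. \<forall>k\<ge>N. 1 + real k \<le> \<epsilon> * \<bar>real k - m\<bar> powr r"
proof -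
  have "((\<lambda>y::real. y powr (1 - r)) \<longlongrightarrow> 0) at_top"
    by (rule tendsto_neg_powr) (use r in \<open>auto simp: filterlim_ident\<close>)
  then have "((\<lambda>y::real. 2 * (1 + m) * y powr (1 - r)) \<longlongrightarrow> 2 * (1 + m) * 0) at_top"
    by (intro tendsto_mult tendsto_const)
  then have "eventually (\<lambda>y. 2 * (1 + m) * y powr (1 - r) < \<epsilon>) at_top"
    using e by (intro order_tendstoD(2)) auto
  moreover have "eventually (\<lambda>y::real. y \<ge> 1) at_top" by (rule eventually_ge_at_top)
  ultimately have "eventually (\<lambda>y. 2 * (1 + m) * y powr (1 - r) < \<epsilon> \<and> y \<ge> 1) at_top"
    by eventually_elim auto
  then obtain Y where Y: "\<And>y. y \<ge> Y \<Longrightarrow> 2 * (1 + m) * y powr (1 - r) < \<epsilon> \<and> y \<ge> 1"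
    unfolding eventually_at_top_linorder by blast
  show ?thesis
  proof (intro exI allI impI)
    fix k :: nat assume k: "k \<ge> nat \<lceil>m + Y\<rceil>"
    define y where "y = \<bar>real k - m\<bar>"
    have "Y \<ge> 1" using Y[of Y] by auto
    have "real k \<ge> m + Y" using k by linarith
    then have yY: "y \<ge> Y" and yk: "y = real k - m" unfolding y_def using \<open>Y \<ge> 1\<close> by auto
    with Y have y1: "y \<ge> 1" and ys: "2 * (1 + m) * y powr (1 - r) < \<epsilon>" by auto
    have "1 + real k \<le> (1 + m) * (2 * y)" 
    proof -
      have "m * 1 \<le> m * y" using m y1 by (intro mult_left_mono) auto
      moreover have "(1+m)*(2*y) = 2*y + 2*(m*y)" by (simp add: algebra_simps)
      ultimately show ?thesis using yk y1 m by linarith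
    qed
    also have "\<dots> = 2 * (1 + m) * y powr (1 - r) * y powr r"
    proof -
      have "y powr (1 - r) * y powr r = y powr 1" using y1 by (simp add: powr_add[symmetric])
      then show ?thesis using y1 by (simp add: algebra_simps)
    qed
    also have "\<dots> \<le> \<epsilon> * y powr r" using ys by (intro mult_right_mono) auto
    finally show "1 + real k \<le> \<epsilon> * \<bar>real k - m\<bar> powr r" unfolding y_def .
  qed
qed

lemma tail_bounds:
  fixes \<epsilon> :: real
  assumes p: "p \<in> Mset r m C" and e: "\<epsilon> \<ge> 0"
    and N: "\<forall>k\<ge>N. 1 + real k \<le> \<epsilon> * \<bar>real k - m\<bar> powr r"
  shows "1 - \<epsilon> * C \<le> (\<Sum>k<N. p k)" "(\<Sum>k<N. p k) \<le> 1"
    "m - \<epsilon> * C \<le> (\<Sum>k<N. real k * p k)" "(\<Sum>k<N. real k * p k) \<le> m"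
    "summable (\<lambda>k. p (k + N))" "(\<Sum>k. p (k + N)) \<le> \<epsilon> * C"
proof -
  note F = Mset_facts[OF p]
  have sp: "p sums 1" using has_sum_imp_sums[OF F(6)] .
  have sm: "(\<lambda>k. real k * p k) sums m" using has_sum_imp_sums[OF F(2)] .
  have sM: "(\<lambda>k. \<bar>real k - m\<bar> powr r * p k) sums moment m r p"
    using F(3) unfolding has_moment_def moment_def by (rule summable_sums)
  define T where "T = (\<lambda>k. (1 + real (k + N)) * p (k + N))"
  have sMN: "summable (\<lambda>k. \<bar>real (k + N) - m\<bar> powr r * p (k + N))"
    using summable_ignore_initial_segment[OF sums_summable[OF sM], of N] by simp
  have MN: "(\<Sum>k. \<bar>real (k + N) - m\<bar> powr r * p (k + N)) \<le> moment m r p"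
  proof -
    have "moment m r p = (\<Sum>k. \<bar>real (k + N) - m\<bar> powr r * p (k + N)) + (\<Sum>k<N. \<bar>real k - m\<bar> powr r * p k)"
      using suminf_split_initial_segment[OF sums_summable[OF sM], of N] sums_unique[OF sM] by simp
    moreover have "(\<Sum>k<N. \<bar>real k - m\<bar> powr r * p k) \<ge> 0" using F(5) by (intro sum_nonneg) auto
    ultimately show ?thesis by linarith
  qed
  have Tle: "T k \<le> \<epsilon> * (\<bar>real (k + N) - m\<bar> powr r * p (k + N))" for k
  proof -
    have "(1 + real (k + N)) * p (k + N) \<le> (\<epsilon> * \<bar>real (k + N) - m\<bar> powr r) * p (k + N)"
      by (rule mult_right_mono) (use N[rule_format, of "k+N"] F(5)[of "k+N"] in auto)
    then show ?thesis unfolding T_def by (simp add: mult.assoc)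
  qed
  have T0: "0 \<le> T k" for k unfolding T_def using F(5)[of "k+N"] by simp
  have sT: "summable T"
    by (rule summable_comparison_test[OF _ summable_mult[OF sMN, of \<epsilon>]]) (use Tle T0 in auto)
  have Tb: "suminf T \<le> \<epsilon> * C"
  proof -
    have "suminf T \<le> (\<Sum>k. \<epsilon> * (\<bar>real (k + N) - m\<bar> powr r * p (k + N)))"
      by (rule suminf_le[OF Tle sT summable_mult[OF sMN]])
    also have "\<dots> = \<epsilon> * (\<Sum>k. \<bar>real (k + N) - m\<bar> powr r * p (k + N))" by (rule suminf_mult[OF sMN])
    also have "\<dots> \<le> \<epsilon> * C" using MN F(4) e by (intro mult_left_mono) auto
    finally show ?thesis .
  qed
  show spN: "summable (\<lambda>k. p (k + N))"
    using summable_ignore_initial_segment[OF sums_summable[OF sp], of N] by simp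
  have smN: "summable (\<lambda>k. real (k + N) * p (k + N))"
    using summable_ignore_initial_segment[OF sums_summable[OF sm], of N] by simp
  have t1: "(\<Sum>k. p (k + N)) \<le> suminf T"
  proof (rule suminf_le[OF _ spN sT])
    fix n
    have "1 * p (n + N) \<le> (1 + real (n + N)) * p (n + N)" by (rule mult_right_mono) (use F(5) in auto)
    then show "p (n + N) \<le> T n" unfolding T_def by simp
  qed
  have t2: "(\<Sum>k. real (k + N) * p (k + N)) \<le> suminf T"
    by (rule suminf_le[OF _ smN sT]) (use F(5) in \<open>auto simp: T_def algebra_simps\<close>)
  have e1: "1 = (\<Sum>k. p (k + N)) + (\<Sum>k<N. p k)"
    using suminf_split_initial_segment[OF sums_summable[OF sp], of N] sums_unique[OF sp] by simp
  have e2: "m = (\<Sum>k. real (k + N) * p (k + N)) + (\<Sum>k<N. real k * p k)"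
    using suminf_split_initial_segment[OF sums_summable[OF sm], of N] sums_unique[OF sm] by simp
  have n1: "(\<Sum>k. p (k + N)) \<ge> 0" using F(5) by (intro suminf_nonneg spN) auto
  have n2: "(\<Sum>k. real (k + N) * p (k + N)) \<ge> 0" using F(5) by (intro suminf_nonneg smN) auto
  show "1 - \<epsilon> * C \<le> (\<Sum>k<N. p k)" "(\<Sum>k<N. p k) \<le> 1"
    "m - \<epsilon> * C \<le> (\<Sum>k<N. real k * p k)" "(\<Sum>k<N. real k * p k) \<le> m"
    "(\<Sum>k. p (k + N)) \<le> \<epsilon> * C"
    using e1 e2 n1 n2 t1 t2 Tb by linarith+
qed

lemma lim_partial:
  assumes "\<And>k. (\<lambda>n. \<sigma> n k) \<longlonglongrightarrow> (l k :: real)"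
  shows "(\<lambda>n. \<Sum>k<N. g k * \<sigma> n k) \<longlonglongrightarrow> (\<Sum>k<N. g k * l k)"
  by (intro tendsto_sum tendsto_mult_left assms)

lemma lim_between:
  fixes X :: "nat \<Rightarrow> real"
  assumes "X \<longlonglongrightarrow> x" "\<And>n. a \<le> X n" "\<And>n. X n \<le> b"
  shows "a \<le> x" "x \<le> b"
  using LIMSEQ_le_const[OF assms(1)] LIMSEQ_le_const2[OF assms(1)] assms(2,3) by blast+

lemma Mset_l1: "p \<in> Mset r m C \<Longrightarrow> p \<in> l1_space"
  using Mset_facts(5,6)[of p r m C] has_sum_imp_sums[of p 1]
  by (auto simp: l1_space_def sums_iff)

lemma eps_N:
  fixes \<epsilon> C r m :: real
  assumes r: "r > 1" and m: "m \<ge> 0" and C: "C \<ge> 0" and e: "\<epsilon> > 0"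
  shows "\<exists>N \<delta>. \<delta> \<ge> 0 \<and> \<delta> * C < \<epsilon> \<and> (\<forall>k\<ge>N. 1 + real k \<le> \<delta> * \<bar>real k - m\<bar> powr r)"
proof -
  define \<delta> where "\<delta> = \<epsilon> / (C + 1)"
  have d: "\<delta> > 0" using e C by (simp add: \<delta>_def)
  have "\<delta> * C < \<epsilon>" using e C unfolding \<delta>_def by (simp add: field_simps)
  moreover obtain N where "\<forall>k\<ge>N. 1 + real k \<le> \<delta> * \<bar>real k - m\<bar> powr r"
    using weight_bound[OF r m d] by blast
  ultimately show ?thesis using d by (intro exI[of _ N] exI[of _ \<delta>]) auto
qed

lemma Mset_limit:
  assumes r: "r > 1" and m: "m \<ge> 0" and C: "C \<ge> 0"
    and \<sigma>: "\<And>n. \<sigma> n \<in> Mset r m C" and lim: "\<And>k. (\<lambda>n. \<sigma> n k) \<longlonglongrightarrow> l k"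
  shows "l \<in> Mset r m C" "(\<lambda>n. l1_dist (\<sigma> n) l) \<longlonglongrightarrow> 0"
proof -
  note F = Mset_facts[OF \<sigma>]
  have l0: "0 \<le> l k" for k by (rule LIMSEQ_le_const[OF lim]) (use F(5) in auto)
  have mom_part: "(\<Sum>k<N. \<bar>real k - m\<bar> powr r * l k) \<le> C" for N
  proof -
    have bnd: "(\<Sum>k<N. \<bar>real k - m\<bar> powr r * \<sigma> n k) \<le> C" for n
    proof -
    have "(\<Sum>k<N. \<bar>real k - m\<bar> powr r * \<sigma> n k) \<le> moment m r (\<sigma> n)"
      unfolding moment_def using F(3)[of n] F(5) unfolding has_moment_def
      by (intro sum_le_suminf) auto
    then show "(\<Sum>k<N. \<bar>real k - m\<bar> powr r * \<sigma> n k) \<le> C" using F(4)[of n] by linarith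
    qed
    show ?thesis by (rule LIMSEQ_le_const2[OF lim_partial[OF lim]]) (use bnd in auto)
  qed
  have hm: "has_moment m r l" unfolding has_moment_def
    by (rule summableI_nonneg_bounded[OF _ mom_part]) (use l0 in auto)
  have mC: "moment m r l \<le> C" unfolding moment_def
    by (rule suminf_le_const[OF hm[unfolded has_moment_def] mom_part])
  have mass: "l sums 1" unfolding sums_def
  proof (rule LIMSEQ_I)
    fix \<epsilon> :: real assume e: "\<epsilon> > 0"
    obtain N \<delta> where d: "\<delta> \<ge> 0" "\<delta> * C < \<epsilon>" and N: "\<forall>k\<ge>N. 1 + real k \<le> \<delta> * \<bar>real k - m\<bar> powr r"
      using eps_N[OF r m C e] by blast
    have "norm (sum l {..<N'} - 1) < \<epsilon>" if "N' \<ge> N" for N'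
    proof -
      have N': "\<forall>k\<ge>N'. 1 + real k \<le> \<delta> * \<bar>real k - m\<bar> powr r" using N that by auto
      note T = tail_bounds[OF \<sigma> d(1) N']
      have Ta: "1 - \<delta> * C \<le> (\<Sum>k<N'. 1 * \<sigma> n k)" "(\<Sum>k<N'. 1 * \<sigma> n k) \<le> 1" for n
        using T(1)[of n] T(2)[of n] by simp_all
      have "1 - \<delta> * C \<le> (\<Sum>k<N'. 1 * l k)" "(\<Sum>k<N'. 1 * l k) \<le> 1"
        using lim_between[OF lim_partial[OF lim] Ta] by auto
      then show ?thesis using d by simp
    qed
    then show "\<exists>no. \<forall>n\<ge>no. norm (sum l {..<n} - 1) < \<epsilon>" by blast
  qed
  have mean: "(\<lambda>k. real k * l k) sums m" unfolding sums_def
  proof (rule LIMSEQ_I)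
    fix \<epsilon> :: real assume e: "\<epsilon> > 0"
    obtain N \<delta> where d: "\<delta> \<ge> 0" "\<delta> * C < \<epsilon>" and N: "\<forall>k\<ge>N. 1 + real k \<le> \<delta> * \<bar>real k - m\<bar> powr r"
      using eps_N[OF r m C e] by blast
    have "norm ((\<Sum>k<N'. real k * l k) - m) < \<epsilon>" if "N' \<ge> N" for N'
    proof -
      have N': "\<forall>k\<ge>N'. 1 + real k \<le> \<delta> * \<bar>real k - m\<bar> powr r" using N that by auto
      note T = tail_bounds[OF \<sigma> d(1) N']
      have "m - \<delta> * C \<le> (\<Sum>k<N'. real k * l k)" "(\<Sum>k<N'. real k * l k) \<le> m"
        using lim_between[OF lim_partial[OF lim] T(3) T(4)] by auto
      then show ?thesis using d by simp
    qed
    then show "\<exists>no. \<forall>n\<ge>no. norm ((\<Sum>k<n. real k * l k) - m) < \<epsilon>" by blast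
  qed
  show lM: "l \<in> Mset r m C"
    unfolding Mset_def prob_seqs_def using l0 mass mean hm mC by (auto simp: sums_iff)
  note G = Mset_facts[OF lM]
  show "(\<lambda>n. l1_dist (\<sigma> n) l) \<longlonglongrightarrow> 0"
  proof (rule LIMSEQ_I)
    fix \<epsilon> :: real assume e: "\<epsilon> > 0"
    have e2: "\<epsilon> / 4 > 0" using e by simp
    obtain N \<delta> where d: "\<delta> \<ge> 0" "\<delta> * C < \<epsilon> / 4" and N: "\<forall>k\<ge>N. 1 + real k \<le> \<delta> * \<bar>real k - m\<bar> powr r"
      using eps_N[OF r m C e2] by blast
    have "(\<lambda>n. \<Sum>k<N. \<bar>\<sigma> n k - l k\<bar>) \<longlonglongrightarrow> (\<Sum>k<N. \<bar>l k - l k\<bar>)"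
      by (intro tendsto_sum tendsto_rabs tendsto_diff lim tendsto_const)
    then have "(\<lambda>n. \<Sum>k<N. \<bar>\<sigma> n k - l k\<bar>) \<longlonglongrightarrow> 0" by simp
    then obtain n0 where n0: "\<And>n. n \<ge> n0 \<Longrightarrow> (\<Sum>k<N. \<bar>\<sigma> n k - l k\<bar>) < \<epsilon> / 2"
    proof -
      have "eventually (\<lambda>n. (\<Sum>k<N. \<bar>\<sigma> n k - l k\<bar>) < \<epsilon> / 2) sequentially"
        by (rule order_tendstoD(2)[OF \<open>(\<lambda>n. \<Sum>k<N. \<bar>\<sigma> n k - l k\<bar>) \<longlonglongrightarrow> 0\<close>]) (use e in simp)
      then show ?thesis using that unfolding eventually_sequentially by blast
    qed
    have "norm (l1_dist (\<sigma> n) l - 0) < \<epsilon>" if "n \<ge> n0" for n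
    proof -
      have s: "summable (\<lambda>k. \<bar>\<sigma> n k - l k\<bar>)" by (rule l1_diff_summable[OF Mset_l1[OF \<sigma>] Mset_l1[OF lM]])
      have dist: "l1_dist (\<sigma> n) l = (\<Sum>k. \<bar>\<sigma> n k - l k\<bar>)" using s by (simp add: l1_dist_def l1_norm_def)
      have sp: "summable (\<lambda>k. \<sigma> n (k + N))" "summable (\<lambda>k. l (k + N))"
        using tail_bounds(5)[OF \<sigma> d(1) N] tail_bounds(5)[OF lM d(1) N] by auto
      have split: "(\<Sum>k. \<bar>\<sigma> n k - l k\<bar>) = (\<Sum>k. \<bar>\<sigma> n (k + N) - l (k + N)\<bar>) + (\<Sum>k<N. \<bar>\<sigma> n k - l k\<bar>)"
        by (rule suminf_split_initial_segment[OF s])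
      have "(\<Sum>k. \<bar>\<sigma> n (k + N) - l (k + N)\<bar>) \<le> (\<Sum>k. \<sigma> n (k + N) + l (k + N))"
      proof (rule suminf_le)
        show "summable (\<lambda>k. \<bar>\<sigma> n (k + N) - l (k + N)\<bar>)" using summable_ignore_initial_segment[OF s, of N] by simp
        show "summable (\<lambda>k. \<sigma> n (k + N) + l (k + N))" by (rule summable_add[OF sp])
        fix k show "\<bar>\<sigma> n (k + N) - l (k + N)\<bar> \<le> \<sigma> n (k + N) + l (k + N)"
          using F(5)[of n "k+N"] l0[of "k+N"] by linarith
      qed
      also have "\<dots> = (\<Sum>k. \<sigma> n (k + N)) + (\<Sum>k. l (k + N))" by (rule suminf_add[OF sp, symmetric])
      also have "\<dots> \<le> \<delta> * C + \<delta> * C"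
        using tail_bounds(6)[OF \<sigma> d(1) N] tail_bounds(6)[OF lM d(1) N] by (intro add_mono) auto
      finally have "(\<Sum>k. \<bar>\<sigma> n (k + N) - l (k + N)\<bar>) < \<epsilon> / 2" using d by linarith
      moreover have "0 \<le> l1_dist (\<sigma> n) l" by (rule l1.nonneg)
      ultimately show ?thesis using dist split n0[OF that] by simp
    qed
    then show "\<exists>no. \<forall>n\<ge>no. norm (l1_dist (\<sigma> n) l - 0) < \<epsilon>" by blast
  qed
qed

lemma Mset_compact:
  assumes r: "r > 1" and m: "m \<ge> 0" and C: "C \<ge> 0"
  shows "compactin l1.mtopology (Mset r m C)"
  unfolding l1.compactin_sequentially
proof (intro conjI allI impI)
  show "Mset r m C \<subseteq> l1_space" using Mset_l1 by blast
  fix \<sigma> :: "nat \<Rightarrow> nat \<Rightarrow> real" assume "range \<sigma> \<subseteq> Mset r m C"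
  then have \<sigma>: "\<sigma> n \<in> Mset r m C" for n by auto
  have b: "0 \<le> \<sigma> n k \<and> \<sigma> n k \<le> 1" for n k
  proof -
    note F = Mset_facts[OF \<sigma>[of n]]
    have "sum (\<sigma> n) {k} \<le> 1" by (rule finite_sum_le_has_sum[OF F(6)]) (use F(5) in auto)
    then show ?thesis using F(5) by simp
  qed
  obtain l rr where rr: "strict_mono rr" and lim: "\<And>k. (\<lambda>n. \<sigma> (rr n) k) \<longlonglongrightarrow> l k"
    using unit_subseq[of \<sigma>, OF b] by blast
  have \<sigma>': "(\<sigma> \<circ> rr) n \<in> Mset r m C" for n using \<sigma> by simp
  have lim': "(\<lambda>n. (\<sigma> \<circ> rr) n k) \<longlonglongrightarrow> l k" for k using lim by simp
  note L = Mset_limit[OF r m C \<sigma>' lim']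
  have "limitin l1.mtopology (\<sigma> \<circ> rr) l sequentially"
    unfolding l1.limitin_metric
  proof (intro conjI allI impI)
    show "l \<in> l1_space" using Mset_l1[OF L(1)] .
    fix \<epsilon> :: real assume "\<epsilon> > 0"
    then have "eventually (\<lambda>n. l1_dist ((\<sigma> \<circ> rr) n) l < \<epsilon>) sequentially"
      using order_tendstoD(2)[OF L(2)] by blast
    then show "\<forall>\<^sub>F n in sequentially. (\<sigma> \<circ> rr) n \<in> l1_space \<and> l1_dist ((\<sigma> \<circ> rr) n) l < \<epsilon>"
      by eventually_elim (use Mset_l1[OF \<sigma>'] in auto)
  qed
  then show "\<exists>l rr. l \<in> Mset r m C \<and> strict_mono rr \<and> limitin l1.mtopology (\<sigma> \<circ> rr) l sequentially"
    using L(1) rr by blast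
qed

lemma moment1_Fm:
  assumes r: "r > 1" and p: "p \<in> Mset r m C" shows "moment m 1 p = Fm m p"
  using M1_formula[OF Mset_facts(5,6,2)[OF p] has_moment_1[OF _ p]] r by simp

lemma Fm_lipschitz:
  assumes m: "m \<ge> 0" and a: "a \<in> l1_space" and x: "x \<in> l1_space"
  shows "\<bar>Fm m x - Fm m a\<bar> \<le> 2 * m * l1_dist a x"
proof -
  define Q where "Q = {k::nat. real k < m}"
  have fQ: "finite Q" unfolding Q_def by (rule finite_below)
  have s: "summable (\<lambda>k. \<bar>a k - x k\<bar>)" by (rule l1_diff_summable[OF a x])
  have e1: "Fm m x - Fm m a = 2 * ((\<Sum>k\<in>Q. (m - real k) * x k) - (\<Sum>k\<in>Q. (m - real k) * a k))"
    unfolding Fm_def Q_def by (simp only: right_diff_distrib)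
  have e2: "(\<Sum>k\<in>Q. (m - real k) * (x k - a k)) = (\<Sum>k\<in>Q. (m - real k) * x k) - (\<Sum>k\<in>Q. (m - real k) * a k)"
    by (subst sum_subtractf[symmetric]) (rule sum.cong, auto simp: algebra_simps)
  have "Fm m x - Fm m a = 2 * (\<Sum>k\<in>Q. (m - real k) * (x k - a k))"
    using e1 e2 by simp
  then have "\<bar>Fm m x - Fm m a\<bar> \<le> 2 * (\<Sum>k\<in>Q. \<bar>(m - real k) * (x k - a k)\<bar>)"
    using sum_abs[of "\<lambda>k. (m - real k) * (x k - a k)" Q] by (simp add: abs_mult)
  also have "\<dots> \<le> 2 * (\<Sum>k\<in>Q. m * \<bar>a k - x k\<bar>)"
  proof -
    have "\<bar>(m - real k) * (x k - a k)\<bar> \<le> m * \<bar>a k - x k\<bar>" if "k \<in> Q" for k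
    proof -
      have "\<bar>m - real k\<bar> \<le> m" using that m unfolding Q_def by auto
      then show ?thesis by (simp add: abs_mult abs_minus_commute mult_right_mono)
    qed
    then show ?thesis by (intro mult_left_mono sum_mono) auto
  qed
  also have "\<dots> = 2 * m * (\<Sum>k\<in>Q. \<bar>a k - x k\<bar>)" by (simp add: sum_distrib_left mult.assoc)
  also have "\<dots> \<le> 2 * m * (\<Sum>k. \<bar>a k - x k\<bar>)"
    using m by (intro mult_left_mono sum_le_suminf[OF s fQ]) auto
  also have "\<dots> = 2 * m * l1_dist a x" using s by (simp add: l1_dist_def l1_norm_def)
  finally show ?thesis .
qed

lemma M1_continuous:
  assumes r: "r > 1" and m: "m \<ge> 0"
  shows "continuous_map (subtopology l1.mtopology (Mset r m C)) euclideanreal (moment m 1)"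
proof -
  have sub: "Mset r m C \<subseteq> l1_space" using Mset_l1 by blast
  interpret S: Submetric l1_space l1_dist "Mset r m C" by unfold_locales (rule sub)
  have "continuous_map S.sub.mtopology euclideanreal (moment m 1)"
    unfolding S.sub.continuous_map_from_metric
  proof (intro conjI ballI allI impI)
    show "moment m 1 \<in> Mset r m C \<rightarrow> topspace euclideanreal" by simp
    fix a U assume a: "a \<in> Mset r m C" and U: "openin euclideanreal U \<and> moment m 1 a \<in> U"
    then obtain e where e: "e > 0" "ball (moment m 1 a) e \<subseteq> U"
      by (auto simp: open_contains_ball)
    show "\<exists>\<rho>>0. \<forall>x. x \<in> Mset r m C \<and> l1_dist a x < \<rho> \<longrightarrow> moment m 1 x \<in> U"
    proof (intro exI[of _ "e / (2 * m + 1)"] conjI allI impI)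
      show "e / (2 * m + 1) > 0" using e m by simp
      fix x assume x: "x \<in> Mset r m C \<and> l1_dist a x < e / (2 * m + 1)"
      have "\<bar>Fm m x - Fm m a\<bar> \<le> 2 * m * l1_dist a x"
        using Fm_lipschitz[OF m Mset_l1[OF a]] Mset_l1 x by blast
      also have "\<dots> \<le> (2 * m + 1) * l1_dist a x" using l1.nonneg[of a x] by (simp add: mult_right_mono)
      also have "\<dots> < e" using x m by (simp add: field_simps)
      finally have "\<bar>moment m 1 x - moment m 1 a\<bar> < e"
        using moment1_Fm[OF r a] moment1_Fm[OF r conjunct1[OF x]] by simp
      then show "moment m 1 x \<in> U" using e by (auto simp: dist_real_def)
    qed
  qed
  then show ?thesis using S.mtopology_submetric by simp
qed

lemma Fm_diff: "Fm m x - Fm m a = 2 * (\<Sum>k\<in>{k::nat. real k < m}. (m - real k) * (x k - a k))"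
proof -
  have e1: "Fm m x - Fm m a = 2 * ((\<Sum>k\<in>{k::nat. real k < m}. (m - real k) * x k) - (\<Sum>k\<in>{k::nat. real k < m}. (m - real k) * a k))"
    unfolding Fm_def by (simp only: right_diff_distrib)
  have e2: "(\<Sum>k\<in>{k::nat. real k < m}. (m - real k) * (x k - a k)) = (\<Sum>k\<in>{k::nat. real k < m}. (m - real k) * x k) - (\<Sum>k\<in>{k::nat. real k < m}. (m - real k) * a k)"
    by (subst sum_subtractf[symmetric]) (rule sum.cong, auto simp: algebra_simps)
  show ?thesis using e1 e2 by simp
qed

lemma lyapunov:
  assumes r: "r > 1" and m: "m \<ge> 0" and p0: "p0 \<in> Mset r m C" and T: "T > 0"
    and x0: "x 0 = p0" and xin: "\<forall>t\<in>{0..<T}. x t \<in> Mset r m C"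
    and der: "\<forall>t\<in>{0..<T}. l1_has_derivative_within x (\<lambda>k. R0 (x t) k - x t k) t {0..<T}"
  shows "Liminf (at_right 0) (\<lambda>t. ereal ((moment m 1 (x t) - moment m 1 p0) / t)) \<le> 0"
proof -
  define v where "v = (\<lambda>k. R0 p0 k - p0 k)"
  have "l1_has_derivative_within x v 0 {0..<T}" using der T x0 unfolding v_def by auto
  then have dl1: "\<And>s. x s - x 0 \<in> l1_space" and vl1: "v \<in> l1_space"
    and tl: "((\<lambda>s. l1_norm (\<lambda>k. (x s k - x 0 k) / (s - 0) - v k)) \<longlongrightarrow> 0) (at 0 within {0..<T})"
    unfolding l1_has_derivative_within_def by auto
  have filt: "at (0::real) within {0..<T} = at_right 0"
    by (rule at_within_nhd[of 0 "{-T<..<T}"]) (use T in auto)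
  have tl': "((\<lambda>s. l1_norm (\<lambda>k. (x s k - x 0 k) / s - v k)) \<longlongrightarrow> 0) (at_right 0)"
    using tl unfolding filt by simp
  have coord: "((\<lambda>s. (x s k - x 0 k) / s) \<longlongrightarrow> v k) (at_right 0)" for k
  proof -
    have bnd: "norm ((x s k - x 0 k) / s - v k) \<le> l1_norm (\<lambda>k. (x s k - x 0 k) / s - v k)" for s
    proof -
      have sd: "summable (\<lambda>k. \<bar>x s k - x 0 k\<bar>)" using dl1[of s] by (simp add: l1_space_def)
      have sv: "summable (\<lambda>k. \<bar>v k\<bar>)" using vl1 by (simp add: l1_space_def)
      have sw: "summable (\<lambda>k. \<bar>(x s k - x 0 k) / s - v k\<bar>)"
      proof (rule summable_comparison_test[OF _ summable_add[OF summable_mult[OF sd, of "\<bar>1/s\<bar>"] sv]], intro exI allI impI)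
        fix k
        have "\<bar>(x s k - x 0 k) / s - v k\<bar> \<le> \<bar>(x s k - x 0 k) / s\<bar> + \<bar>v k\<bar>" by (rule abs_triangle_ineq4)
        also have "\<bar>(x s k - x 0 k) / s\<bar> = \<bar>1/s\<bar> * \<bar>x s k - x 0 k\<bar>" by (simp add: abs_mult field_simps)
        finally show "norm \<bar>(x s k - x 0 k) / s - v k\<bar> \<le> \<bar>1/s\<bar> * \<bar>x s k - x 0 k\<bar> + \<bar>v k\<bar>" by simp
      qed
      have "\<bar>(x s k - x 0 k) / s - v k\<bar> = sum (\<lambda>k. \<bar>(x s k - x 0 k) / s - v k\<bar>) {k}" by simp
      also have "\<dots> \<le> (\<Sum>k. \<bar>(x s k - x 0 k) / s - v k\<bar>)" by (rule sum_le_suminf[OF sw]) auto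
      finally show ?thesis using sw by (simp add: l1_norm_def)
    qed
    have "((\<lambda>s. (x s k - x 0 k) / s - v k) \<longlongrightarrow> 0) (at_right 0)"
      by (rule Lim_null_comparison[OF _ tl']) (use bnd in auto)
    then have "((\<lambda>s. ((x s k - x 0 k) / s - v k) + v k) \<longlongrightarrow> 0 + v k) (at_right 0)"
      by (intro tendsto_add tendsto_const)
    then show ?thesis by simp
  qed
  define L where "L = 2 * (\<Sum>k\<in>{k::nat. real k < m}. (m - real k) * v k)"
  have limq: "((\<lambda>s. 2 * (\<Sum>k\<in>{k::nat. real k < m}. (m - real k) * ((x s k - x 0 k) / s))) \<longlongrightarrow> L) (at_right 0)"
    unfolding L_def by (intro tendsto_mult tendsto_const tendsto_sum coord)
  have ev: "eventually (\<lambda>s. 2 * (\<Sum>k\<in>{k::nat. real k < m}. (m - real k) * ((x s k - x 0 k) / s))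
      = (moment m 1 (x s) - moment m 1 p0) / s) (at_right 0)"
  proof -
    have "eventually (\<lambda>s. s \<in> {0<..<T}) (at_right (0::real))" by (rule eventually_at_right_real[OF T])
    then show ?thesis
    proof eventually_elim
      case (elim s)
      then have xs: "x s \<in> Mset r m C" using xin by auto
      have "(moment m 1 (x s) - moment m 1 p0) / s = (Fm m (x s) - Fm m (x 0)) / s"
        using moment1_Fm[OF r xs] moment1_Fm[OF r p0] x0 by simp
      also have "\<dots> = 2 * (\<Sum>k\<in>{k::nat. real k < m}. (m - real k) * (x s k - x 0 k)) / s"
        unfolding Fm_diff ..
      also have "\<dots> = 2 * (\<Sum>k\<in>{k::nat. real k < m}. (m - real k) * ((x s k - x 0 k) / s))"
        by (simp add: sum_divide_distrib[symmetric])
      finally show ?case by simp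
    qed
  qed
  have lim: "((\<lambda>s. (moment m 1 (x s) - moment m 1 p0) / s) \<longlongrightarrow> L) (at_right 0)"
    using tendsto_cong[OF ev] limq by simp
  note F = Mset_facts[OF p0]
  have R1: "moment m 1 (R0 p0) \<le> moment m 1 p0" and hR: "has_moment m 1 (R0 p0)"
    using R0_part[OF r p0, of 1] by auto
  have mR: "moment m 1 (R0 p0) = Fm m (R0 p0)"
    by (rule M1_formula[OF R0_nonneg[OF F(5)] R0_mass[OF F(1)] R0_mean[OF F(1) F(2)] hR])
  have "L = Fm m (R0 p0) - Fm m p0" unfolding L_def v_def Fm_diff ..
  then have L0: "L \<le> 0" using R1 mR moment1_Fm[OF r p0] by simp
  have "Liminf (at_right 0) (\<lambda>t. ereal ((moment m 1 (x t) - moment m 1 p0) / t)) = ereal L"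
    by (rule lim_imp_Liminf) (use lim in \<open>auto intro: tendsto_ereal\<close>)
  then show ?thesis using L0 by simp
qed
theorem lemma2:
  fixes r m C :: real
  assumes "r > 1" and "0 \<le> m" and "0 \<le> C"
  shows
    \<comment> \<open>compact (in the l^1 metric) and convex\<close>
    "compactin l1.mtopology (Mset r m C)
     \<and> (\<forall>p\<in>Mset r m C. \<forall>q\<in>Mset r m C. \<forall>t::real. 0 \<le> t \<and> t \<le> 1 \<longrightarrow>
          (\<lambda>k. t * p k + (1 - t) * q k) \<in> Mset r m C)
     \<comment> \<open>M_1 and M_r decrease under R_0, with equality iff fixed point\<close>
     \<and> (\<forall>s\<in>{1, r}. \<forall>p\<in>Mset r m C.
          has_moment m s p \<and> has_moment m s (R0 p)
          \<and> moment m s (R0 p) \<le> moment m s p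
          \<and> (moment m s (R0 p) = moment m s p \<longleftrightarrow> R0 p = p))
     \<comment> \<open>M_1 is a continuous map from Mset to [0, infinity)\<close>
     \<and> (\<forall>p\<in>Mset r m C. 0 \<le> moment m 1 p)
     \<and> continuous_map (subtopology l1.mtopology (Mset r m C)) euclideanreal (moment m 1)
     \<comment> \<open>M_1 is a Lyapunov function for dp/dt = R_0(p) - p on Mset\<close>
     \<and> (\<forall>p0\<in>Mset r m C. \<forall>T>0. \<forall>x :: real \<Rightarrow> nat \<Rightarrow> real.
          x 0 = p0 \<and> (\<forall>t\<in>{0..<T}. x t \<in> Mset r m C)
          \<and> (\<forall>t\<in>{0..<T}. l1_has_derivative_within x (\<lambda>k. R0 (x t) k - x t k) t {0..<T})
          \<longrightarrow> Liminf (at_right 0) (\<lambda>t. ereal ((moment m 1 (x t) - moment m 1 p0) / t)) \<le> 0)"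
proof (intro conjI ballI allI impI)
  show "compactin l1.mtopology (Mset r m C)" by (rule Mset_compact[OF assms])
next
  fix p q and t :: real assume "p \<in> Mset r m C" "q \<in> Mset r m C" "0 \<le> t \<and> t \<le> 1"
  then show "(\<lambda>k. t * p k + (1 - t) * q k) \<in> Mset r m C" using Mset_convex by blast
next
  fix s p assume "s \<in> {1, r}" "p \<in> Mset r m C"
  note R = R0_part[OF assms(1) this(2) this(1)]
  show "has_moment m s p" using R by blast
  show "has_moment m s (R0 p)" using R by blast
  show "moment m s (R0 p) \<le> moment m s p" using R by blast
  show "moment m s (R0 p) = moment m s p \<longleftrightarrow> R0 p = p" using R by blast
next
  fix p assume p: "p \<in> Mset r m C"
  have "has_moment m 1 p" by (rule has_moment_1[OF _ p]) (use assms in auto)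
  then show "0 \<le> moment m 1 p" unfolding has_moment_def moment_def
    by (intro suminf_nonneg) (use Mset_facts(5)[OF p] in auto)
next
  show "continuous_map (subtopology l1.mtopology (Mset r m C)) euclideanreal (moment m 1)"
    by (rule M1_continuous) (use assms in auto)
next
  fix p0 T x
  assume "p0 \<in> Mset r m C" "T > 0"
    "x 0 = p0 \<and> (\<forall>t\<in>{0..<T}. x t \<in> Mset r m C)
     \<and> (\<forall>t\<in>{0..<T}. l1_has_derivative_within x (\<lambda>k. R0 (x t) k - x t k) t {0..<T})"
  then show "Liminf (at_right 0) (\<lambda>t. ereal ((moment m 1 (x t) - moment m 1 p0) / t)) \<le> 0"
    using lyapunov[OF assms(1,2)] by blast
qed

end
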